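(* Let $A$ be an abelian topological group such that $\alpha_A$ is continuous. Then $\hat A$ has the quasi-convex compactness property.
   Context: $\mathbb{T}=\mathbb{R}/\mathbb{Z}$, $\Lambda_1$ is the image of $[-\tfrac14,\tfrac14]$ in $\mathbb{T}$. For an abelian topological group $B$, $\hat B$ is the group of continuous homomorphisms $B\to\mathbb{T}$ with the compact-open topology and $\alpha_B\colon B\to\hat{\hat B}$, $\alpha_B(b)(\chi)=\chi(b)$. For $S\subseteq B$, $S^\vartriangleright=\{\chi\in\hat B\mid\chi(S)\subseteq\Lambda_1\}$; for $\Phi\subseteq\hat B$, $\Phi^\vartriangleleft=\{b\in B\mid\chi(b)\in\Lambda_1\ \forall\chi\in\Phi\}$. $B$ has the quasi-convex compactness property (QCP) if for every compact $K\subseteq B$ the set $K^{\vartriangleright\vartriangleleft}$ (polars taken with respect to the pair $B,\hat B$) is compact. For $B=\hat A$, the polars are taken with respect to the pair $\hat A,\hat{\hat A}$. *)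

theory Defs
  imports "HOL-Analysis.Analysis"
begin

text \<open>The circle group T = R/Z is represented as the unit circle in the complex
plane (via t \<mapsto> exp(2 pi i t)), with complex multiplication as group operation.
Under this identification Lambda_1 = image of [-1/4,1/4] is the closed right half circle.\<close>

definition Lambda1 :: "complex set" where
  "Lambda1 = {z. cmod z = 1 \<and> 0 \<le> Re z}"

text \<open>Continuous characters of a topological group with carrier topspace X and
group operation m. Characters are made extensional (value 1 off the carrier).\<close>
definition characters :: "'b topology \<Rightarrow> ('b \<Rightarrow> 'b \<Rightarrow> 'b) \<Rightarrow> ('b \<Rightarrow> complex) set" where
  "characters X m = {c. continuous_map X euclidean c
      \<and> (\<forall>x\<in>topspace X. cmod (c x) = 1)
      \<and> (\<forall>x\<in>topspace X. \<forall>y\<in>topspace X. c (m x y) = c x * c y)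
      \<and> (\<forall>x. x \<notin> topspace X \<longrightarrow> c x = 1)}"

definition compact_open :: "'b topology \<Rightarrow> ('b \<Rightarrow> complex) set \<Rightarrow> ('b \<Rightarrow> complex) topology" where
  "compact_open X S = topology_generated_by
      {{c \<in> S. c ` K \<subseteq> U} | K U. compactin X K \<and> open U}"

definition dual_top :: "'b topology \<Rightarrow> ('b \<Rightarrow> 'b \<Rightarrow> 'b) \<Rightarrow> ('b \<Rightarrow> complex) topology" where
  "dual_top X m = compact_open X (characters X m)"

definition char_mult :: "('b \<Rightarrow> complex) \<Rightarrow> ('b \<Rightarrow> complex) \<Rightarrow> ('b \<Rightarrow> complex)" where
  "char_mult f g = (\<lambda>x. f x * g x)"

definition polar_r :: "'b topology \<Rightarrow> ('b \<Rightarrow> 'b \<Rightarrow> 'b) \<Rightarrow> 'b set \<Rightarrow> ('b \<Rightarrow> complex) set" where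
  "polar_r X m S = {c \<in> characters X m. c ` S \<subseteq> Lambda1}"

definition polar_l :: "'b topology \<Rightarrow> ('b \<Rightarrow> 'b \<Rightarrow> 'b) \<Rightarrow> ('b \<Rightarrow> complex) set \<Rightarrow> 'b set" where
  "polar_l X m \<Phi> = {b \<in> topspace X. \<forall>c\<in>\<Phi>. c b \<in> Lambda1}"

definition QCP :: "'b topology \<Rightarrow> ('b \<Rightarrow> 'b \<Rightarrow> 'b) \<Rightarrow> bool" where
  "QCP X m \<longleftrightarrow> (\<forall>K. compactin X K \<longrightarrow> compactin X (polar_l X m (polar_r X m K)))"

definition alpha :: "'b topology \<Rightarrow> ('b \<Rightarrow> 'b \<Rightarrow> 'b) \<Rightarrow> 'b \<Rightarrow> (('b \<Rightarrow> complex) \<Rightarrow> complex)" where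
  "alpha X m a = (\<lambda>c. if c \<in> characters X m then c a else 1)"

end

theory Submission
  imports Defs
begin

lemma cmod_sq_minus1:
  fixes z :: complex assumes "cmod z = 1"
  shows "(cmod (z - 1))^2 = 2 - 2 * Re z" "(cmod (z + 1))^2 = 2 + 2 * Re z"
proof -
  have h: "(Re z)^2 + (Im z)^2 = 1" using assms by (metis cmod_power2 one_power2)
  show "(cmod (z - 1))^2 = 2 - 2 * Re z" unfolding cmod_power2 using h by (simp add: power2_eq_square algebra_simps)
  show "(cmod (z + 1))^2 = 2 + 2 * Re z" unfolding cmod_power2 using h by (simp add: power2_eq_square algebra_simps)
qed

lemma z_lemma:
  fixes z :: complex
  assumes "cmod z = 1" "\<forall>k\<le>j. 0 \<le> Re (z^(2^k))"
  shows "(cmod (z - 1))^2 \<le> 2 / 2^j"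
  using assms
proof (induction j arbitrary: z)
  case 0
  then show ?case using cmod_sq_minus1(1)[OF 0(1)] by auto
next
  case (Suc j)
  have m2: "cmod (z^2) = 1" using Suc.prems(1) by (simp add: norm_power)
  have "\<forall>k\<le>j. 0 \<le> Re ((z^2)^(2^k))"
  proof (intro allI impI)
    fix k assume "k \<le> j"
    then have "0 \<le> Re (z^(2^Suc k))" using Suc.prems(2) by auto
    moreover have "z^(2^Suc k) = (z^2)^(2^k)" by (simp add: power_mult[symmetric] mult.commute)
    ultimately show "0 \<le> Re ((z^2)^(2^k))" by simp
  qed
  then have ih: "(cmod (z^2 - 1))^2 \<le> 2 / 2^j" using Suc.IH m2 by blast
  have "z^2 - 1 = (z - 1) * (z + 1)" by (simp add: power2_eq_square algebra_simps)
  then have e: "(cmod (z^2 - 1))^2 = (cmod (z - 1))^2 * (cmod (z + 1))^2"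
    by (simp add: norm_mult power_mult_distrib)
  have "0 \<le> Re z" using Suc.prems(2) by (metis le0 power_0 power_one_right)
  then have "2 \<le> (cmod (z + 1))^2" using cmod_sq_minus1(2)[OF Suc.prems(1)] by simp
  then have "(cmod (z - 1))^2 * 2 \<le> (cmod (z - 1))^2 * (cmod (z + 1))^2"
    by (intro mult_left_mono) auto
  then have "(cmod (z - 1))^2 * 2 \<le> 2 / 2^j" using ih e by linarith
  then show ?case by (simp add: field_simps)
qed

lemma continuous_map_cmult:
  fixes f g :: "'b \<Rightarrow> complex"
  shows "continuous_map X euclidean f \<Longrightarrow> continuous_map X euclidean g \<Longrightarrow> continuous_map X euclidean (\<lambda>x. f x * g x)"
  by (simp add: continuous_map_atin tendsto_mult)

lemma hom_zero:
  fixes c :: "'a::ab_group_add \<Rightarrow> complex"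
  assumes "\<forall>x. cmod (c x) = 1" "\<forall>x y. c (x + y) = c x * c y"
  shows "c 0 = 1"
proof -
  have "c 0 = c 0 * c 0" using assms(2) by (metis add_0)
  moreover have "c 0 \<noteq> 0" using assms(1) by (metis norm_zero zero_neq_one)
  ultimately show ?thesis by (metis mult_cancel_left1)
qed

lemma hom_dbl:
  fixes c :: "'a::ab_group_add \<Rightarrow> complex"
  assumes "\<forall>x y. c (x + y) = c x * c y"
  shows "c (((\<lambda>x. x + x)^^k) x) = c x ^ (2^k)"
proof (induction k)
  case 0 then show ?case by simp
next
  case (Suc k)
  have "c (((\<lambda>x. x + x)^^Suc k) x) = c (((\<lambda>x. x + x)^^k) x) * c (((\<lambda>x. x + x)^^k) x)"
    using assms by simp
  also have "\<dots> = (c x ^ (2^k))^2" using Suc by (simp add: power2_eq_square)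
  also have "\<dots> = c x ^ (2^Suc k)" by (simp add: power_mult[symmetric] mult.commute)
  finally show ?case .
qed

lemma dbl_zero: "((\<lambda>x::'a::ab_group_add. x + x)^^k) 0 = 0"
  by (induction k) auto

lemma cont_translate:
  fixes X :: "'a::ab_group_add topology"
  assumes top: "topspace X = UNIV"
    and add: "continuous_map (prod_topology X X) X (\<lambda>(x, y). x + y)"
  shows "continuous_map X X (\<lambda>y. y + a)"
proof -
  have "continuous_map X (prod_topology X X) (\<lambda>y. (y, a))"
  proof -
    have c: "continuous_map X X (\<lambda>y. a)" using top by simp
    show ?thesis using continuous_map_pairedI[OF continuous_map_id[unfolded id_def] c] .
  qed
  from continuous_map_compose[OF this add] show ?thesis by (simp add: o_def)
qed

lemma cont_dbl:
  fixes X :: "'a::ab_group_add topology"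
  assumes add: "continuous_map (prod_topology X X) X (\<lambda>(x, y). x + y)"
  shows "continuous_map X X ((\<lambda>x. x + x)^^k)"
proof (induction k)
  case 0 then show ?case by simp
next
  case (Suc k)
  have d: "continuous_map X X (\<lambda>x. x + x)"
  proof -
    have "continuous_map X (prod_topology X X) (\<lambda>y. (y, y))"
      using continuous_map_pairedI[OF continuous_map_id[unfolded id_def] continuous_map_id[unfolded id_def]] by blast
    from continuous_map_compose[OF this add] show ?thesis by (simp add: o_def)
  qed
  have "(\<lambda>x. x + x)^^Suc k = (\<lambda>x. x + x) \<circ> ((\<lambda>x. x + x)^^k)" by simp
  then show ?case using continuous_map_compose[OF Suc d] by metis
qed

lemma equicont:
  fixes X :: "'a::ab_group_add topology"
  assumes top: "topspace X = UNIV"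
    and add: "continuous_map (prod_topology X X) X (\<lambda>(x, y). x + y)"
    and V: "openin X V" "0 \<in> V" and d: "\<delta> > 0"
  obtains N where "openin X N" "0 \<in> N"
    "\<And>c n. \<forall>x. cmod (c x) = 1 \<Longrightarrow> \<forall>x y. c (x + y) = c x * c y \<Longrightarrow> \<forall>a\<in>V. c a \<in> Lambda1
       \<Longrightarrow> n \<in> N \<Longrightarrow> cmod (c n - 1) < \<delta>"
proof -
  have "\<delta>^2 / 2 > 0" using d by simp
  then obtain j where j: "(inverse 2::real)^j < \<delta>^2 / 2"
    using real_arch_pow_inv[of "\<delta>^2/2" "inverse 2"] by auto
  have j2: "2 / 2^j < \<delta>^2" using j by (simp add: field_simps power_inverse)
  define N where "N = (\<Inter>k\<in>{..j}. {x \<in> topspace X. ((\<lambda>x. x + x)^^k) x \<in> V})"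
  have "openin X N" unfolding N_def
    by (intro openin_INT2) (auto intro: openin_continuous_map_preimage[OF cont_dbl[OF add] V(1)])
  moreover have "0 \<in> N" unfolding N_def using V(2) top by (simp add: dbl_zero)
  moreover have "cmod (c n - 1) < \<delta>"
    if c1: "\<forall>x. cmod (c x) = 1" and ch: "\<forall>x y. c (x + y) = c x * c y" and cV: "\<forall>a\<in>V. c a \<in> Lambda1"
      and n: "n \<in> N" for c n
  proof -
    have "\<forall>k\<le>j. 0 \<le> Re (c n ^ (2^k))"
    proof (intro allI impI)
      fix k assume "k \<le> j"
      then have "((\<lambda>x. x + x)^^k) n \<in> V" using n unfolding N_def by auto
      then have "c (((\<lambda>x. x + x)^^k) n) \<in> Lambda1" using cV by blast
      then show "0 \<le> Re (c n ^ (2^k))" unfolding hom_dbl[OF ch] Lambda1_def by simp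
    qed
    then have "(cmod (c n - 1))^2 \<le> 2 / 2^j" using z_lemma c1 by blast
    then have "(cmod (c n - 1))^2 < \<delta>^2" using j2 by linarith
    then show ?thesis using d by (meson norm_ge_zero power_less_imp_less_base less_imp_le)
  qed
  ultimately show ?thesis using that by blast
qed

lemma char_cont:
  fixes X :: "'a::ab_group_add topology"
  assumes top: "topspace X = UNIV"
    and add: "continuous_map (prod_topology X X) X (\<lambda>(x, y). x + y)"
    and V: "openin X V" "0 \<in> V"
    and c1: "\<forall>x. cmod (c x) = 1" and ch: "\<forall>x y. c (x + y) = c x * c y" and cV: "\<forall>a\<in>V. c a \<in> Lambda1"
  shows "continuous_map X euclidean c"
  unfolding mtopology_is_euclidean[symmetric] Met_TC.continuous_map_to_metric mball_eq_ball
proof (intro ballI allI impI)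
  fix x and e :: real assume "x \<in> topspace X" "0 < e"
  obtain N where N: "openin X N" "0 \<in> N"
    "\<And>n. n \<in> N \<Longrightarrow> cmod (c n - 1) < e"
    using equicont[OF top add V \<open>0 < e\<close>] c1 ch cV by metis
  define U where "U = {y \<in> topspace X. y + (- x) \<in> N}"
  have "openin X U" unfolding U_def by (rule openin_continuous_map_preimage[OF cont_translate[OF top add] N(1)])
  moreover have "x \<in> U" using N(2) top unfolding U_def by simp
  moreover have "c y \<in> ball (c x) e" if "y \<in> U" for y
  proof -
    have n: "cmod (c (y - x) - 1) < e" using N(3) that unfolding U_def by simp
    have "c y = c x * c (y - x)" using ch[rule_format, of x "y - x"] by simp
    then have "c x - c y = c x * (1 - c (y - x))" by (simp add: algebra_simps)
    then have "dist (c x) (c y) = cmod (c (y - x) - 1)"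
      by (simp add: dist_norm norm_mult c1 norm_minus_commute)
    then show ?thesis using n by simp
  qed
  ultimately show "\<exists>U. openin X U \<and> x \<in> U \<and> (\<forall>y\<in>U. c y \<in> ball (c x) e)" by blast
qed

lemma closed_Lambda1: "closed Lambda1"
proof -
  have "Lambda1 = sphere 0 1 \<inter> {z. 0 \<le> Re z}" unfolding Lambda1_def by auto
  then show ?thesis by (metis closed_Int closed_halfspace_Re_ge closed_sphere)
qed

lemma chars_iff:
  fixes X :: "'a::ab_group_add topology"
  assumes top: "topspace X = UNIV"
  shows "c \<in> characters X (+) \<longleftrightarrow> continuous_map X euclidean c \<and> (\<forall>x. cmod (c x) = 1) \<and> (\<forall>x y. c (x + y) = c x * c y)"
  by (simp add: characters_def top)

lemma topspace_dual: "topspace (dual_top X m) = characters X m"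
proof -
  have "characters X m \<in> {{c \<in> characters X m. c ` K \<subseteq> U} | K U. compactin X K \<and> open U}"
    by (rule CollectI, rule exI[of _ "{}"], rule exI[of _ UNIV]) auto
  then show ?thesis unfolding dual_top_def compact_open_def topology_generated_by_topspace by blast
qed

lemma W_compact:
  fixes X :: "'a::ab_group_add topology"
  assumes top: "topspace X = UNIV"
    and add: "continuous_map (prod_topology X X) X (\<lambda>(x, y). x + y)"
    and V: "openin X V" "0 \<in> V"
  shows "compactin (dual_top X (+)) {c \<in> characters X (+). \<forall>a\<in>V. c a \<in> Lambda1}"
proof -
  define W where "W = {c \<in> characters X (+). \<forall>a\<in>V. c a \<in> Lambda1}"
  define P :: "('a \<Rightarrow> complex) topology" where "P = product_topology (\<lambda>_. euclidean) UNIV"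
  have tP: "topspace P = UNIV" unfolding P_def by simp
  have W_eq: "W = {c. (\<forall>x. cmod (c x) = 1) \<and> (\<forall>x y. c (x + y) = c x * c y) \<and> (\<forall>a\<in>V. c a \<in> Lambda1)}"
    unfolding W_def chars_iff[OF top] using char_cont[OF top add V] by blast
  have proj: "continuous_map P euclidean (\<lambda>c. c x)" for x
    unfolding P_def using continuous_map_product_projection[of x UNIV "\<lambda>_. euclidean"] by simp
  define F1 where "F1 = (\<lambda>x. {c \<in> topspace P. c x \<in> sphere 0 1}) ` UNIV"
  define F2 where "F2 = (\<lambda>(x,y). {c \<in> topspace P. c (x + y) - c x * c y \<in> {0}}) ` UNIV"
  define F3 where "F3 = (\<lambda>a. {c \<in> topspace P. c a \<in> Lambda1}) ` V"
  have "W = \<Inter>(F1 \<union> F2 \<union> F3)"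
    unfolding W_eq F1_def F2_def F3_def tP by auto
  moreover have "closedin P (\<Inter>(F1 \<union> F2 \<union> F3))"
  proof (rule closedin_Inter)
    show "F1 \<union> F2 \<union> F3 \<noteq> {}" unfolding F1_def by auto
    fix S assume "S \<in> F1 \<union> F2 \<union> F3"
    then show "closedin P S"
    proof (elim UnE)
      assume "S \<in> F1" then show ?thesis unfolding F1_def
        using closedin_continuous_map_preimage[OF proj] closed_closedin closed_sphere by blast
    next
      assume "S \<in> F3" then show ?thesis unfolding F3_def
        using closedin_continuous_map_preimage[OF proj] closed_closedin closed_Lambda1 by blast
    next
      assume "S \<in> F2"
      then obtain x y where S: "S = {c \<in> topspace P. c (x + y) - c x * c y \<in> {0}}" unfolding F2_def by auto
      have "continuous_map P euclidean (\<lambda>c. c (x + y) - c x * c y)"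
        by (intro continuous_map_diff continuous_map_cmult proj)
      then show ?thesis unfolding S
        using closedin_continuous_map_preimage closed_closedin closed_singleton by blast
    qed
  qed
  ultimately have Wcl: "closedin P W" by simp
  have "compactin P (PiE UNIV (\<lambda>_. sphere (0::complex) 1))"
    unfolding P_def compactin_PiE by simp
  moreover have "W \<subseteq> PiE UNIV (\<lambda>_. sphere (0::complex) 1)" unfolding W_eq by auto
  ultimately have WP: "compactin P W" using Wcl closed_compactin by blast
  then have WsP: "compactin (subtopology P W) W" by (simp add: compactin_subtopology)
  have tsW: "topspace (subtopology P W) = W" using tP by simp
  have "continuous_map (subtopology P W) (dual_top X (+)) id"
    unfolding dual_top_def compact_open_def
  proof (rule continuous_on_generated_topo)
    show "id ` topspace (subtopology P W) \<subseteq> \<Union>{{c \<in> characters X (+). c ` K \<subseteq> U} | K U. compactin X K \<and> open U}"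
      using topspace_dual[of X "(+)"] unfolding dual_top_def compact_open_def topology_generated_by_topspace tsW W_def
      by auto
  next
    fix G assume "G \<in> {{c \<in> characters X (+). c ` K \<subseteq> U} | K U. compactin X K \<and> open U}"
    then obtain K Op where G: "G = {c \<in> characters X (+). c ` K \<subseteq> Op}" and K: "compactin X K" and Op: "open Op"
      by blast
    have eqG: "id -` G \<inter> topspace (subtopology P W) = G \<inter> W" using tsW by auto
    have "openin (subtopology P W) (G \<inter> W)"
    proof (subst openin_subopen, intro ballI)
      fix c0 assume c0: "c0 \<in> G \<inter> W"
      then have c0ch: "c0 \<in> characters X (+)" and c0K: "c0 ` K \<subseteq> Op" using G by auto
      have "compactin euclidean (c0 ` K)"
        using image_compactin[OF K] c0ch unfolding characters_def by blast
      then have "compact (c0 ` K)" by simp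
      then obtain e where e: "e > 0" "(\<Union>x\<in>c0 ` K. ball x e) \<subseteq> Op"
        using compact_subset_open_imp_ball_epsilon_subset[OF _ Op c0K] by blast
      have e3: "e / 3 > 0" using e by simp
      obtain N where N: "openin X N" "0 \<in> N"
        "\<And>c n. \<forall>x. cmod (c x) = 1 \<Longrightarrow> \<forall>x y. c (x + y) = c x * c y \<Longrightarrow> \<forall>a\<in>V. c a \<in> Lambda1
          \<Longrightarrow> n \<in> N \<Longrightarrow> cmod (c n - 1) < e / 3"
        using equicont[OF top add V e3] by metis
      have Nb: "cmod (c n - 1) < e / 3" if "c \<in> W" "n \<in> N" for c n
        using N(3)[of c n] that unfolding W_eq by blast
      define Cov where "Cov = (\<lambda>k. {y \<in> topspace X. y + (- k) \<in> N}) ` K"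
      have o1: "\<forall>S\<in>Cov. openin X S" unfolding Cov_def
        using openin_continuous_map_preimage[OF cont_translate[OF top add] N(1)] by blast
      have o2: "K \<subseteq> \<Union>Cov" unfolding Cov_def using N(2) top by force
      have "\<exists>F. finite F \<and> F \<subseteq> Cov \<and> K \<subseteq> \<Union>F"
        using conjunct2[OF K[unfolded compactin_def], rule_format, of Cov] o1 o2 by blast
      then obtain Fc where Fc: "finite Fc" "Fc \<subseteq> Cov" "K \<subseteq> \<Union>Fc"
        by blast
      obtain F where F: "F \<subseteq> K" "finite F" "Fc = (\<lambda>k. {y \<in> topspace X. y + (- k) \<in> N}) ` F"
        using finite_subset_image[OF Fc(1) Fc(2)[unfolded Cov_def]] by blast
      have cov: "\<exists>k\<in>F. x - k \<in> N" if xK: "x \<in> K" for x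
      proof -
        obtain S where "S \<in> Fc" "x \<in> S" using Fc(3) xK by blast
        then show ?thesis unfolding F(3) by auto
      qed
      define T where "T = topspace P \<inter> \<Inter>((\<lambda>k. {c \<in> topspace P. c k \<in> ball (c0 k) (e/3)}) ` F)"
      have "openin P T" unfolding T_def
      proof (rule openin_Int_Inter)
        show "finite ((\<lambda>k. {c \<in> topspace P. c k \<in> ball (c0 k) (e/3)}) ` F)" using F by simp
      next
        fix S assume "S \<in> (\<lambda>k. {c \<in> topspace P. c k \<in> ball (c0 k) (e/3)}) ` F"
        then obtain k where "S = {c \<in> topspace P. c k \<in> ball (c0 k) (e/3)}" by blast
        then show "openin P S"
          using openin_continuous_map_preimage[OF proj, of "ball (c0 k) (e/3)" k] by simp
      qed simp
      then have "openin (subtopology P W) (W \<inter> T)" by (rule openin_subtopology_Int2)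
      moreover have "c0 \<in> W \<inter> T" using c0 e3 unfolding T_def tP by auto
      moreover have "W \<inter> T \<subseteq> G \<inter> W"
      proof
        fix c assume c: "c \<in> W \<inter> T"
        have "c x \<in> Op" if x: "x \<in> K" for x
        proof -
          obtain k where k: "k \<in> F" "x - k \<in> N" using cov x by blast
          have ck: "dist (c0 k) (c k) < e / 3" using c k(1) unfolding T_def by auto
          have c0W: "c0 \<in> W" using c0 by blast
          have cW: "c \<in> W" using c by blast
          have m0: "cmod (c0 k) = 1" and m1: "cmod (c k) = 1" using c0W cW unfolding W_eq by auto
          have hh0: "\<forall>x y. c0 (x + y) = c0 x * c0 y" using c0W unfolding W_eq by blast
          have h0: "c0 x = c0 k * c0 (x - k)" using hh0[rule_format, of k "x - k"] by simp
          have hh1: "\<forall>x y. c (x + y) = c x * c y" using cW unfolding W_eq by blast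
          have h1: "c x = c k * c (x - k)" using hh1[rule_format, of k "x - k"] by simp
          have "c0 x - c x = c0 k * (c0 (x - k) - 1) + (c0 k - c k) + c k * (1 - c (x - k))"
            unfolding h0 h1 by (simp add: algebra_simps)
          then have "cmod (c0 x - c x) = cmod (c0 k * (c0 (x - k) - 1) + (c0 k - c k) + c k * (1 - c (x - k)))"
            by (rule arg_cong)
          moreover have "cmod (c0 k * (c0 (x - k) - 1) + (c0 k - c k) + c k * (1 - c (x - k))) \<le> cmod (c0 k * (c0 (x - k) - 1) + (c0 k - c k)) + cmod (c k * (1 - c (x - k)))"
            by (rule norm_triangle_ineq)
          moreover have "cmod (c0 k * (c0 (x - k) - 1) + (c0 k - c k)) \<le> cmod (c0 k * (c0 (x - k) - 1)) + cmod (c0 k - c k)"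
            by (rule norm_triangle_ineq)
          ultimately have "cmod (c0 x - c x) \<le> cmod (c0 k * (c0 (x - k) - 1)) + cmod (c0 k - c k) + cmod (c k * (1 - c (x - k)))"
            by linarith
          also have "\<dots> = cmod (c0 (x - k) - 1) + dist (c0 k) (c k) + cmod (c (x - k) - 1)"
            by (simp add: norm_mult m0 m1 dist_norm norm_minus_commute)
          also have "\<dots> < e / 3 + e / 3 + e / 3"
            using Nb[OF c0W k(2)] Nb[OF cW k(2)] ck by linarith
          finally have "dist (c0 x) (c x) < e" by (simp add: dist_norm)
          then have "c x \<in> ball (c0 x) e" by simp
          then show ?thesis using e(2) x by blast
        qed
        moreover have "c \<in> characters X (+)" using c unfolding W_def by blast
        ultimately show "c \<in> G \<inter> W" using c unfolding G by blast
      qed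
      ultimately show "\<exists>T'. openin (subtopology P W) T' \<and> c0 \<in> T' \<and> T' \<subseteq> G \<inter> W" by blast
    qed
    then show "openin (subtopology P W) (id -` G \<inter> topspace (subtopology P W))" unfolding eqG .
  qed
  from image_compactin[OF WsP this] show ?thesis unfolding W_def by simp
qed


theorem mainTheorem7:
  fixes X :: "'a::ab_group_add topology"
  assumes "topspace X = UNIV"
    and "continuous_map (prod_topology X X) X (\<lambda>(x, y). x + y)"
    and "continuous_map X X uminus"
    and "continuous_map X (dual_top (dual_top X (+)) char_mult) (alpha X (+))"
  shows "QCP (dual_top X (+)) char_mult"
  unfolding QCP_def
proof (intro allI impI)
  note top = assms(1) and add = assms(2) and al = assms(4)
  define B where "B = dual_top X (+)"
  fix K assume K: "compactin (dual_top X (+)) K"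
  have tB: "topspace B = characters X (+)" unfolding B_def by (rule topspace_dual)
  have KB: "K \<subseteq> characters X (+)" using compactin_subset_topspace[OF K] tB unfolding B_def by simp
  define Op where "Op = {\<psi> \<in> characters B char_mult. \<psi> ` K \<subseteq> {z. 0 < Re z}}"
  have "Op \<in> {{c \<in> characters B char_mult. c ` K' \<subseteq> U} | K' U. compactin B K' \<and> open U}"
    unfolding Op_def B_def using K open_halfspace_Re_gt by blast
  then have oOp: "openin (dual_top B char_mult) Op"
    unfolding dual_top_def compact_open_def by (rule topology_generated_by_Basis)
  define V where "V = {a \<in> topspace X. alpha X (+) a \<in> Op}"
  have oV: "openin X V" unfolding V_def
    using openin_continuous_map_preimage[OF al[folded B_def] oOp] .
  have alB: "alpha X (+) a \<in> characters B char_mult" for a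
    using continuous_map_image_subset_topspace[OF al[folded B_def]] top topspace_dual[of B char_mult]
    by auto
  have ch1: "\<forall>x. cmod (g x) = 1" "\<forall>x y. g (x + y) = g x * g y" if "g \<in> characters X (+)" for g
    using that chars_iff[OF top] by auto
  have "0 \<in> V"
  proof -
    have "alpha X (+) 0 g = 1" if "g \<in> K" for g
      using that KB hom_zero[OF ch1] unfolding alpha_def by auto
    then show ?thesis unfolding V_def Op_def using alB top by auto
  qed
  have W: "compactin B {c \<in> characters X (+). \<forall>a\<in>V. c a \<in> Lambda1}"
    unfolding B_def by (rule W_compact[OF top add oV \<open>0 \<in> V\<close>])
  have sub: "polar_l B char_mult (polar_r B char_mult K) \<subseteq> {c \<in> characters X (+). \<forall>a\<in>V. c a \<in> Lambda1}"
  proof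
    fix g assume g: "g \<in> polar_l B char_mult (polar_r B char_mult K)"
    then have gc: "g \<in> characters X (+)" unfolding polar_l_def tB by blast
    have "g a \<in> Lambda1" if a: "a \<in> V" for a
    proof -
      have "alpha X (+) a \<in> polar_r B char_mult K"
        unfolding polar_r_def
      proof (intro CollectI conjI alB subsetI)
        fix z assume "z \<in> alpha X (+) a ` K"
        then obtain \<psi> where \<psi>: "\<psi> \<in> K" "z = alpha X (+) a \<psi>" by blast
        have "z = \<psi> a" using \<psi> KB unfolding alpha_def by auto
        moreover have "0 < Re (\<psi> a)" using a \<psi> KB unfolding V_def Op_def alpha_def by auto
        moreover have "cmod (\<psi> a) = 1" using ch1 \<psi>(1) KB by blast
        ultimately show "z \<in> Lambda1" unfolding Lambda1_def by simp
      qed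
      then have "alpha X (+) a g \<in> Lambda1" using g unfolding polar_l_def by blast
      then show ?thesis using gc unfolding alpha_def by simp
    qed
    then show "g \<in> {c \<in> characters X (+). \<forall>a\<in>V. c a \<in> Lambda1}" using gc by blast
  qed
  have cl: "closedin B (polar_l B char_mult \<Phi>)" if "\<Phi> \<subseteq> characters B char_mult" for \<Phi>
  proof (cases "\<Phi> = {}")
    case True
    then show ?thesis unfolding polar_l_def by simp
  next
    case False
    have "polar_l B char_mult \<Phi> = \<Inter>((\<lambda>\<psi>. {g \<in> topspace B. \<psi> g \<in> Lambda1}) ` \<Phi>)"
      unfolding polar_l_def using False by auto
    moreover have "closedin B (\<Inter>((\<lambda>\<psi>. {g \<in> topspace B. \<psi> g \<in> Lambda1}) ` \<Phi>))"
    proof (rule closedin_Inter)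
      show "(\<lambda>\<psi>. {g \<in> topspace B. \<psi> g \<in> Lambda1}) ` \<Phi> \<noteq> {}" using False by simp
    next
      fix S assume "S \<in> (\<lambda>\<psi>. {g \<in> topspace B. \<psi> g \<in> Lambda1}) ` \<Phi>"
      then obtain \<psi> where \<psi>: "\<psi> \<in> \<Phi>" "S = {g \<in> topspace B. \<psi> g \<in> Lambda1}" by blast
      have "continuous_map B euclidean \<psi>" using \<psi>(1) that unfolding characters_def by blast
      then show "closedin B S" unfolding \<psi>(2)
        using closedin_continuous_map_preimage closed_Lambda1 closed_closedin by blast
    qed
    ultimately show ?thesis by simp
  qed
  have "closedin B (polar_l B char_mult (polar_r B char_mult K))"
    by (rule cl) (auto simp: polar_r_def)
  from closed_compactin[OF W sub this]
  show "compactin (dual_top X (+)) (polar_l (dual_top X (+)) char_mult (polar_r (dual_top X (+)) char_mult K))"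
    unfolding B_def .
qed

end
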